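(* Fix $m>1$. For $b\in[0,1/\sqrt{24}]$ set $c=c(b)=\sqrt{1+b^2}$, $d=d(b)=\big(2(2b-c)\big)^{-1}$ and $$I(b)=\int_{-1}^{1}\frac{(2+s)-2(bs+c)^2}{(bs+c)^{m+4}}\,(dbs+dc+1)^{m-2}\,(2+s)\,ds .$$ Then $I(0)=\left(\tfrac12\right)^{m-2}\cdot\tfrac23>0$, $I(1/\sqrt{24})<0$, and there exists $b\in(0,1/\sqrt{24})$ with $I(b)=0$.
   Context: For $b\in[0,1/\sqrt{24}]$ one has $d<0$, $bs+c>0$ and $dbs+dc+1\ge 0$ for $s\in[-1,1]$ (with equality only at $b=1/\sqrt{24}$, $s=1$), so the integrand is well defined and integrable. (In the paper, a zero of $I$ yields a smooth $U(2)$-invariant conformally Kähler quasi-Einstein metric on $\mathbb{C}P^2\sharp\overline{\mathbb{C}P}^2$ with parameter $m$.) *)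

theory Defs
  imports "HOL-Analysis.Analysis"
begin

definition cfun :: "real \<Rightarrow> real" where
  "cfun b = sqrt (1 + b^2)"

definition dfun :: "real \<Rightarrow> real" where
  "dfun b = 1 / (2 * (2 * b - cfun b))"

text \<open>The integral I(b) for parameter m (real exponents via powr; the bases are
  positive resp. nonnegative on the relevant range).\<close>
definition Ifun :: "real \<Rightarrow> real \<Rightarrow> real" where
  "Ifun m b = integral {-1..1} (\<lambda>s.
      ((2 + s) - 2 * (b * s + cfun b)^2) / ((b * s + cfun b) powr (m + 4))
      * (dfun b * b * s + dfun b * cfun b + 1) powr (m - 2) * (2 + s))"

end

theory Submission
  imports Defs
begin

definition "b0 = 1 / sqrt 24"
definition "NN b s = (2 + s) - 2 * (b * s + cfun b)^2"
definition "VV b s = b * s + cfun b"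
definition "BB b s = dfun b * b * s + dfun b * cfun b + 1"
definition "FF m b s = NN b s / (VV b s) powr (m + 4) * (BB b s) powr (m - 2) * (2 + s)"

lemma Ifun_FF: "Ifun m b = integral {-1..1} (FF m b)"
  unfolding Ifun_def FF_def NN_def VV_def BB_def by simp

lemma b0_sq: "b0^2 = 1/24"
  unfolding b0_def by (simp add: power_divide)

lemma b0_pos: "b0 > 0" unfolding b0_def by simp

lemma basic:
  assumes "0 \<le> b" "b \<le> b0"
  shows "b^2 \<le> 1/24" "b \<le> 1/4" "(cfun b)^2 = 1 + b^2" "cfun b \<ge> 1" "cfun b \<ge> 5 * b"
        "cfun b \<le> 3/2" "2*b - cfun b < 0"
proof -
  show b2: "b^2 \<le> 1/24" using power_mono[OF assms(2) assms(1), of 2] b0_sq by simp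
  show b4: "b \<le> 1/4"
  proof (rule ccontr)
    assume "\<not> b \<le> 1/4"
    then have "(1/4)^2 < b^2" by (intro power_strict_mono) auto
    then show False using b2 by (simp add: power2_eq_square)
  qed
  show c2: "(cfun b)^2 = 1 + b^2" unfolding cfun_def by simp
  show c1: "cfun b \<ge> 1" unfolding cfun_def by simp
  show "cfun b \<ge> 5 * b" unfolding cfun_def using b2 by (intro real_le_rsqrt) (simp add: power_mult_distrib)
  have "sqrt (1 + b^2) \<le> sqrt ((3/2)^2)" using b2 by (intro real_sqrt_le_mono) (auto simp: power_divide)
  then show "cfun b \<le> 3/2" unfolding cfun_def by simp
  show "2*b - cfun b < 0" using b4 c1 by simp
qed

lemma BB_eq:
  assumes "0 \<le> b" "b \<le> b0"
  shows "BB b s = (cfun b - b * (4 + s)) / (2 * (cfun b - 2 * b))"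
proof -
  define c where "c = cfun b"
  define w where "w = 2 * (c - 2 * b)"
  have w: "w \<noteq> 0" using basic(7)[OF assms] by (simp add: w_def c_def)
  have d: "dfun b = - 1 / w" unfolding dfun_def w_def c_def by (simp add: divide_simps algebra_simps)
  have "BB b s = 1 - (b * s + c) / w" unfolding BB_def d c_def[symmetric] by (simp add: algebra_simps add_divide_distrib)
  also have "\<dots> = (w - (b* s + c)) / w" using w by (subst diff_divide_distrib) simp
  also have "w - (b* s + c) = c - b * (4 + s)" unfolding w_def by (simp add: algebra_simps)
  finally show ?thesis by (simp add: w_def c_def)
qed

lemma facts2:
  assumes "0 \<le> b" "b \<le> b0" "-1 \<le> s" "s \<le> 1"
  shows "cfun b - b * (4 + s) \<ge> 0" "BB b s \<ge> 0" "VV b s \<ge> 1/2"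
    "\<bar>NN b s\<bar> \<le> 2 * (cfun b - b * (4 + s))" "\<bar>NN b s\<bar> \<le> 6 * BB b s"
proof -
  note B = basic[OF assms(1,2)]
  define c where "c = cfun b"
  have c2: "c^2 = 1 + b^2" "c \<ge> 1" "c \<ge> 5*b" "c \<le> 3/2" "b \<le> 1/4" "b^2 \<le> 1/24"
    using B by (auto simp: c_def)
  have bs: "b * s \<le> b" "-b \<le> b * s" using assms
    by (auto simp: mult_left_le intro: mult_left_mono[of "-1" s b, simplified])
  show D: "cfun b - b * (4 + s) \<ge> 0" using c2 bs by (simp add: c_def algebra_simps)
  show BB: "BB b s \<ge> 0" using D B(7) by (simp add: BB_eq[OF assms(1,2)])
  show "VV b s \<ge> 1/2" unfolding VV_def using c2 bs by (simp add: c_def)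
  have i: "NN b s \<le> 2 * (c - b * (4 + s))"
  proof -
    define f where "f s = s - 2*(b^2)* (s^2) - 4*(b*c)* s - 2*b^2 - 2*c + 8*b + 2*b* s" for s
    have e: "NN b s = f s + 2*(c - b*(4+s))"
      unfolding NN_def c_def[symmetric] f_def using c2(1) by (simp add: algebra_simps power2_eq_square)
    have "(b*c)^2 = b^2 * (1 + b^2)" using c2(1) by (simp add: power_mult_distrib)
    also have "\<dots> \<le> (1/24) * (1 + 1/24)" using c2(6) by (intro mult_mono) auto
    also have "\<dots> = (5/24)^2" by (simp add: power_divide)
    finally have bc: "b*c \<le> 5/24" by (rule power2_le_imp_le) simp
    have diff: "f 1 - f s = (1-s)*(1 - 4*(b*c) + 2*b - 2*(b^2*(1+s)))"
      unfolding f_def by (simp add: algebra_simps power2_eq_square)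
    have "b^2*(1+s) \<le> b^2 * 2" using assms by (intro mult_left_mono) auto
    then have fac: "0 \<le> 1 - 4*(b*c) + 2*b - 2*(b^2*(1+s))" using bc c2(6) assms by linarith
    have "0 \<le> (1-s)*(1 - 4*(b*c) + 2*b - 2*(b^2*(1+s)))" using fac assms by simp
    then have fs: "f s \<le> f 1" using diff by linarith
    have f1e: "f 1 = (1 + 10*b - 4*b^2) - 2*c*(2*b+1)" unfolding f_def by (simp add: algebra_simps)
    have "(2*c*(2*b+1))^2 = 4*(1+b^2)*(2*b+1)^2" using c2(1) by (simp add: power_mult_distrib)
    moreover have "4*(1+b^2)*(2*b+1)^2 - (1 + 10*b - 4*b^2)^2 = (24*b^2 - 1)*(4*b - 3)"
      by (simp add: algebra_simps power2_eq_square)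
    moreover have "0 \<le> (24*b^2 - 1)*(4*b - 3)" using c2 by (intro mult_nonpos_nonpos) auto
    ultimately have "(1 + 10*b - 4*b^2)^2 \<le> (2*c*(2*b+1))^2" by linarith
    then have "1 + 10*b - 4*b^2 \<le> 2*c*(2*b+1)" by (rule power2_le_imp_le) (use c2 assms in simp)
    then have "f 1 \<le> 0" using f1e by linarith
    then show ?thesis using e fs by linarith
  qed
  have ii: "- NN b s \<le> 2 * (c - b * (4 + s))"
  proof -
    define g where "g s = 2*(b^2)* (s^2) + s*(4*b*c + 2*b - 1) + 2*b^2 - 2*c + 8*b" for s
    have e: "- NN b s = g s + 2 * (c - b*(4+s))"
      unfolding NN_def c_def[symmetric] g_def using c2(1) by (simp add: algebra_simps power2_eq_square)
    have conv: "g s = (1+s)/2 * g 1 + (1-s)/2 * g (-1) + 2*b^2*(s^2 - 1)"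
      unfolding g_def by (simp add: field_simps power2_eq_square)
    have g1: "g 1 \<le> 0"
    proof -
      have "2*c*(2*b-1) \<le> 10*b*(2*b-1)" using c2 by (intro mult_right_mono_neg) auto
      then show ?thesis unfolding g_def using c2 by (simp add: algebra_simps power2_eq_square)
    qed
    have gm1: "g (-1) \<le> 0"
    proof -
      have "b * c \<ge> b" using c2 assms mult_left_mono[of 1 c b] by simp
      then show ?thesis unfolding g_def using c2 by (simp add: algebra_simps power2_eq_square)
    qed
    have s2: "s^2 \<le> 1" using assms by (simp add: abs_square_le_1)
    have "(1+s)/2 * g 1 \<le> 0" using g1 assms by (intro mult_nonneg_nonpos) auto
    moreover have "(1-s)/2 * g (-1) \<le> 0" using gm1 assms by (intro mult_nonneg_nonpos) auto
    moreover have "2*b^2*(s^2 - 1) \<le> 0" using s2 by (intro mult_nonneg_nonpos) auto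
    ultimately show ?thesis using e conv by linarith
  qed
  show N: "\<bar>NN b s\<bar> \<le> 2 * (cfun b - b * (4 + s))" using i ii by (simp add: c_def)
  have w: "cfun b - 2 * b > 0" "cfun b - 2*b \<le> 3/2" using c2 assms by (auto simp: c_def)
  have "cfun b - b * (4 + s) = BB b s * (2 * (cfun b - 2 * b))"
    using w by (simp add: BB_eq[OF assms(1,2)])
  also have "\<dots> \<le> BB b s * 3" using BB w by (intro mult_left_mono) auto
  finally show "\<bar>NN b s\<bar> \<le> 6 * BB b s" using N by simp
qed

lemma FF_bound:
  assumes m: "m > 1" and "0 \<le> b" "b \<le> b0" "-1 \<le> s" "s \<le> 1"
  shows "\<bar>FF m b s\<bar> \<le> \<bar>BB b s powr (m - 1)\<bar> * (18 / (1/2) powr (m + 4))"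
proof (cases "BB b s = 0")
  case True
  then show ?thesis unfolding FF_def by simp
next
  case False
  note F = facts2[OF assms(2-5)]
  have Bp: "BB b s > 0" using False F(2) by simp
  define P where "P = BB b s powr (m - 2)"
  define Q where "Q = VV b s powr (m + 4)"
  define q where "q = (1/2::real) powr (m + 4)"
  have P: "P > 0" using Bp by (simp add: P_def)
  have q: "q > 0" by (simp add: q_def)
  have Qq: "q \<le> Q" unfolding q_def Q_def using F(3) m by (intro powr_mono2) auto
  have Q: "Q > 0" using q Qq by simp
  have eq: "FF m b s = NN b s * P * (2 + s) / Q"
    unfolding FF_def P_def Q_def by simp
  have "\<bar>FF m b s\<bar> = \<bar>NN b s\<bar> * P * (2 + s) / Q"
    unfolding eq using P Q assms by (simp add: abs_mult)
  also have "\<dots> \<le> (6 * BB b s) * P * 3 / Q"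
    using F(5) P Q assms by (intro divide_right_mono mult_mono) auto
  also have "\<dots> \<le> (6 * BB b s) * P * 3 / q"
    using Bp P Q q Qq by (intro divide_left_mono) auto
  also have "BB b s * P = BB b s powr (m - 1)"
  proof -
    have "BB b s powr (m - 1) = BB b s powr (1 + (m - 2))" by simp
    also have "\<dots> = BB b s powr 1 * BB b s powr (m - 2)" by (rule powr_add)
    finally show ?thesis using Bp by (simp add: P_def)
  qed
  then have "(6 * BB b s) * P * 3 / q = BB b s powr (m - 1) * (18 / q)"
    by (simp add: field_simps)
  finally show ?thesis by (simp add: q_def)
qed

lemma BB_cont:
  assumes "0 \<le> fst p" "fst p \<le> b0"
  shows "continuous (at p within S) (\<lambda>p. BB (fst p) (snd p))"
proof -
  have "2 * fst p - cfun (fst p) \<noteq> 0" using basic(7)[OF assms] by simp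
  then show ?thesis unfolding BB_def dfun_def cfun_def
    by (intro continuous_intros) (auto simp: cfun_def)
qed

lemma FF_cont_pos:
  assumes "0 \<le> fst p" "fst p \<le> b0" "-1 \<le> snd p" "snd p \<le> 1" "BB (fst p) (snd p) > 0"
  shows "continuous (at p within S) (\<lambda>p. FF m (fst p) (snd p))"
proof -
  have "2 * fst p - cfun (fst p) \<noteq> 0" using basic(7)[OF assms(1,2)] by simp
  moreover have "VV (fst p) (snd p) > 0" using facts2(3)[OF assms(1-4)] by simp
  ultimately show ?thesis using assms(5) unfolding FF_def NN_def VV_def BB_def dfun_def cfun_def
    by (intro continuous_intros) (auto simp: cfun_def)
qed

lemma FF_cont:
  assumes m: "m > 1"
  shows "continuous_on ({0..b0} \<times> {-1..1}) (\<lambda>p. FF m (fst p) (snd p))"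
  unfolding continuous_on_eq_continuous_within
proof
  fix p assume p: "p \<in> {0..b0} \<times> {-1..1::real}"
  define S where "S = {0..b0} \<times> {-1..1::real}"
  have pp: "0 \<le> fst p" "fst p \<le> b0" "-1 \<le> snd p" "snd p \<le> 1" using p by auto
  show "continuous (at p within {0..b0} \<times> {-1..1}) (\<lambda>p. FF m (fst p) (snd p))"
  proof (cases "BB (fst p) (snd p) = 0")
    case False
    then have "BB (fst p) (snd p) > 0" using facts2(2)[OF pp] by simp
    then show ?thesis using FF_cont_pos[OF pp] by blast
  next
    case True
    have F0: "FF m (fst p) (snd p) = 0" using FF_bound[OF m pp] True by simp
    have "((\<lambda>q. BB (fst q) (snd q)) \<longlongrightarrow> 0) (at p within S)"
      using BB_cont[OF pp(1,2), of S] True by (simp add: continuous_within)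
    moreover have ev: "\<forall>\<^sub>F q in at p within S. q \<in> S"
      by (simp add: eventually_at_filter)
    then have "\<forall>\<^sub>F q in at p within S. 0 \<le> BB (fst q) (snd q)"
      by eventually_elim (auto simp: S_def intro: facts2(2))
    ultimately have "((\<lambda>q. BB (fst q) (snd q) powr (m - 1)) \<longlongrightarrow> 0) (at p within S)"
      using m by (intro tendsto_zero_powrI[where b = "m - 1"]) auto
    then have "((\<lambda>q. FF m (fst q) (snd q)) \<longlongrightarrow> 0) (at p within S)"
    proof (rule tendsto_0_le[where K = "18 / (1/2) powr (m + 4)"])
      show "\<forall>\<^sub>F q in at p within S. norm (FF m (fst q) (snd q))
              \<le> norm (BB (fst q) (snd q) powr (m - 1)) * (18 / (1/2) powr (m + 4))"
        using ev
      proof eventually_elim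
        case (elim q)
        then show ?case using FF_bound[OF m, of "fst q" "snd q"] by (auto simp: S_def)
      qed
    qed
    then show ?thesis using F0 by (simp add: continuous_within S_def)
  qed
qed

lemma Ifun_cont:
  assumes m: "m > 1"
  shows "continuous_on {0..b0} (Ifun m)"
proof -
  have "continuous_on {0..b0} (\<lambda>b. integral (cbox (-1) 1) (FF m b))"
    by (rule integral_continuous_on_param) (use FF_cont[OF m] in \<open>simp add: split_beta\<close>)
  moreover have "Ifun m = (\<lambda>b. integral (cbox (-1) 1) (FF m b))"
    by (simp add: Ifun_FF fun_eq_iff)
  ultimately show ?thesis by simp
qed

lemma cfun0: "cfun 0 = 1" by (simp add: cfun_def)

lemma Ifun0: "Ifun m 0 = (1/2) powr (m - 2) * (2/3)"
proof -
  have d: "dfun 0 = -1/2" by (simp add: dfun_def cfun0)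
  have F: "FF m 0 = (\<lambda>s. (s^2 + 2 * s) * (1/2) powr (m - 2))"
    by (simp add: fun_eq_iff FF_def NN_def VV_def BB_def d cfun0 algebra_simps power2_eq_square)
  have "((\<lambda>s. s^2 + 2 * s) has_integral ((1^3/3 + 1^2) - ((-1)^3/3 + (-1)^2))) {-1..(1::real)}"
    by (rule fundamental_theorem_of_calculus)
       (auto simp: has_real_derivative_iff_has_vector_derivative[symmetric]
             intro!: derivative_eq_intros simp: power2_eq_square field_simps)
  then have "((\<lambda>s. s^2 + 2 * s) has_integral (2/3)) {-1..(1::real)}" by simp
  then have "((\<lambda>s. (s^2 + 2 * s) * (1/2) powr (m - 2)) has_integral (2/3) * (1/2) powr (m - 2)) {-1..(1::real)}"
    by (rule has_integral_mult_left)
  then have "integral {-1..1} (FF m 0) = (2/3) * (1/2) powr (m - 2)" unfolding F by (rule integral_unique)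
  then show ?thesis unfolding Ifun_FF by (simp add: mult.commute)
qed

lemma cfun_b0: "cfun b0 = 5 * b0"
  unfolding cfun_def using b0_sq b0_pos by (intro real_sqrt_unique) (auto simp: power_mult_distrib)

lemma FF_b0_neg:
  assumes "-1 < s" "s < 1"
  shows "FF m b0 s < 0"
proof -
  have N: "NN b0 s = -((1 - s)^2) / 12"
  proof -
    have "(b0 * s + 5 * b0)^2 = b0^2 * (s + 5)^2" by (simp add: algebra_simps power2_eq_square)
    then show ?thesis unfolding NN_def cfun_b0 b0_sq by (simp add: algebra_simps power2_eq_square)
  qed
  have B: "BB b0 s = (1 - s) / 6"
  proof -
    have "BB b0 s = (5 * b0 - b0 * (4 + s)) / (2 * (5 * b0 - 2 * b0))"
      using BB_eq[of b0 s] b0_pos by (simp add: cfun_b0)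
    also have "\<dots> = (b0 * (1 - s)) / (b0 * 6)" by (simp add: algebra_simps)
    also have "\<dots> = (1 - s) / 6" using b0_pos by simp
    finally show ?thesis .
  qed
  have V: "VV b0 s > 0" using facts2(3)[of b0 s] b0_pos assms by simp
  have "NN b0 s < 0" unfolding N using assms by simp
  moreover have "BB b0 s > 0" unfolding B using assms by simp
  ultimately show ?thesis unfolding FF_def using V assms
    by (simp add: mult_neg_pos divide_neg_pos)
qed

lemma Ifun_b0: assumes m: "m > 1" shows "Ifun m b0 < 0"
proof -
  have c: "continuous_on {-1..1} (FF m b0)"
  proof -
    have "continuous_on {-1..1} ((\<lambda>p. FF m (fst p) (snd p)) \<circ> (\<lambda>s. (b0, s)))"
      using b0_pos by (intro continuous_on_compose continuous_intros continuous_on_subset[OF FF_cont[OF m]]) auto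
    then show ?thesis by (simp add: o_def)
  qed
  have "integral {-1..1} (FF m b0) < integral {-1..1} (\<lambda>s. 0::real)"
    using integral_less_real[OF c continuous_on_const, of 0] FF_b0_neg by auto
  then show ?thesis by (simp add: Ifun_FF)
qed

theorem mainTheorem3:
  fixes m :: real
  assumes "m > 1"
  shows "Ifun m 0 = (1/2) powr (m - 2) * (2/3) \<and> Ifun m 0 > 0
       \<and> Ifun m (1 / sqrt 24) < 0
       \<and> (\<exists>b. 0 < b \<and> b < 1 / sqrt 24 \<and> Ifun m b = 0)"
proof -
  have I0: "Ifun m 0 = (1/2) powr (m - 2) * (2/3)" by (rule Ifun0)
  have I0p: "Ifun m 0 > 0" unfolding I0 by simp
  have Ib: "Ifun m b0 < 0" by (rule Ifun_b0[OF assms])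
  obtain x where x: "0 \<le> x" "x \<le> b0" "Ifun m x = 0"
    using IVT2'[of "Ifun m" b0 0 0] Ib I0p b0_pos Ifun_cont[OF assms] by force
  have "x \<noteq> 0" using x I0p by auto
  moreover have "x \<noteq> b0" using x Ib by auto
  ultimately have "\<exists>b. 0 < b \<and> b < b0 \<and> Ifun m b = 0" using x by (intro exI[of _ x]) auto
  then show ?thesis using I0 I0p Ib by (simp add: b0_def)
qed

end
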